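(* Let $\Theta_{\mathrm{Sym}(V)}:\mathrm{Sym}(V)\to\mathrm{Sym}(V)$ be the linear map with $\Theta_{\mathrm{Sym}(V)}(\overline{v_\alpha})=2^{\ell(\alpha)}\overline{v_\alpha}$ if $v_\alpha$ is odd and $0$ otherwise. Then $\Theta_{\mathrm{Sym}(V)}$ is a graded Hopf algebra morphism with image in $\mathrm{Sym}(\mathrm{O}(V))$, and $\Phi_{\mathrm{Sym}(V)}\circ\Theta_{\mathrm{Sym}(V)}=\Theta_{\mathrm{Sym}}\circ\Phi_{\mathrm{Sym}(V)}$. Thus $\Theta_{\mathrm{Sym}(V)}$ is a theta map for $(\mathrm{Sym}(V),\zeta_{\mathrm{Sym}(V)})$.
   Context: $V$ is a graded vector space with fixed homogeneous basis $\{v_1,v_2,\dots\}$, positive degrees, finitely many of each degree. For a composition $\alpha=(\alpha_1,\dots,\alpha_\ell)$ ($\ell(\alpha)=\ell$), $v_\alpha=v_{\alpha_1}\cdots v_{\alpha_\ell}$ in the tensor algebra $\mathrm{T}(V)$ (concatenation product, $v_i$ primitive). $\mathrm{Sym}(V)=\mathrm{T}(V)/I(V)$ where $I(V)$ is the ideal generated by all $v_iv_j-v_jv_i$; $\overline{v_\alpha}$ is the class of $v_\alpha$, $\deg(\overline{v_\alpha})=\sum\deg(v_{\alpha_i})$. $v_\alpha$ is odd if every $\deg(v_{\alpha_i})$ is odd; $\mathrm{Sym}(\mathrm{O}(V))$ is the span of $\overline{v_\alpha}$ with $v_\alpha$ odd. $\mathrm{Sym}$ is the Hopf algebra of symmetric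 functions with scaled power sums $p_n=\frac1n\sum_i x_i^n$ (primitive, freely generating). $\Phi_{\mathrm{Sym}(V)}:\mathrm{Sym}(V)\to\mathrm{Sym}$ is the algebra morphism $\overline{v_i}\mapsto p_{\deg(v_i)}$; $\zeta_{\mathrm{Sym}(V)}$ is the character $\overline{v_i}\mapsto 1/\deg(v_i)$. $\zeta_{\mathrm{Sym}}(f)=f(1,0,0,\dots)$. $\Theta_{\mathrm{Sym}}$ is the unique graded Hopf morphism $\mathrm{Sym}\to\mathrm{Sym}$ with $\zeta_{\mathrm{Sym}}\circ\Theta_{\mathrm{Sym}}=\overline{\zeta_{\mathrm{Sym}}^{-1}}\zeta_{\mathrm{Sym}}$ (convolution $\zeta\zeta'=m\circ(\zeta\otimes\zeta')\circ\Delta$, $\zeta^{-1}=\zeta\circ\mathcal{S}$, $\bar\zeta=(-1)^n\zeta$ in degree $n$); equivalently the algebra morphism with $\Theta_{\mathrm{Sym}}(p_n)=2p_n$ for $n$ odd and $0$ for $n$ even. A theta map here means a graded Hopf morphism $\Theta$ of $\mathrm{Sym}(V)$ with $\Phi_{\mathrm{Sym}(V)}\circ\Theta=\Theta_{\mathrm{Sym}}\circ\Phi_{\mathrm{Sym}(V)}$. *)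

theory Defs
  imports Main "HOL-Library.Poly_Mapping" "HOL-Library.Product_Plus"
begin

text \<open>
  The fixed homogeneous basis of V is indexed by a type 'i, with a
  degree function deg :: 'i => nat (positive, finitely many basis vectors of
  each degree).  Sym(V) is the commutative polynomial algebra over a field 'k
  of characteristic 0 in the commuting variables v_i:
    an element is a finitely supported map  ('i =>0 nat) =>0 'k,
  a monomial  a :: 'i =>0 nat  standing for the class of v_alpha where alpha
  has exactly  lookup a i  entries equal to i.
  Sym is modelled likewise as the free commutative algebra on the scaled
  power sums p_1, p_2, ...; the variable m :: nat stands for p_(m+1).
  The tensor square of a polynomial algebra is modelled as polynomials in
  pairs of monomials:  (('i =>0 nat) * ('i =>0 nat)) =>0 'k.
\<close>

type_synonym ('i,'k) symV = "('i \<Rightarrow>\<^sub>0 nat) \<Rightarrow>\<^sub>0 'k"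
type_synonym ('i,'k) symV2 = "(('i \<Rightarrow>\<^sub>0 nat) \<times> ('i \<Rightarrow>\<^sub>0 nat)) \<Rightarrow>\<^sub>0 'k"
type_synonym 'k symf = "(nat \<Rightarrow>\<^sub>0 nat) \<Rightarrow>\<^sub>0 'k"

definition smul :: "'k::comm_ring_1 \<Rightarrow> ('m \<Rightarrow>\<^sub>0 'k) \<Rightarrow> ('m \<Rightarrow>\<^sub>0 'k)" where
  "smul c f = Poly_Mapping.map (\<lambda>x. c * x) f"

definition mon :: "'m \<Rightarrow> ('m \<Rightarrow>\<^sub>0 'k::comm_ring_1)" where
  "mon a = Poly_Mapping.single a 1"

definition var :: "'i \<Rightarrow> ('i,'k::comm_ring_1) symV" where
  "var i = mon (Poly_Mapping.single i 1)"

definition psum :: "nat \<Rightarrow> 'k::comm_ring_1 symf" where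
  "psum n = var (n - 1)"

definition subst :: "('i \<Rightarrow> ('m::comm_monoid_add \<Rightarrow>\<^sub>0 'k::comm_ring_1))
     \<Rightarrow> ('i,'k) symV \<Rightarrow> ('m \<Rightarrow>\<^sub>0 'k)" where
  "subst g f = (\<Sum>a\<in>Poly_Mapping.keys f.
       smul (Poly_Mapping.lookup f a) (\<Prod>i\<in>Poly_Mapping.keys a. g i ^ Poly_Mapping.lookup a i))"

definition mlen :: "('i \<Rightarrow>\<^sub>0 nat) \<Rightarrow> nat" where
  "mlen a = (\<Sum>i\<in>Poly_Mapping.keys a. Poly_Mapping.lookup a i)"

definition mdeg :: "('i \<Rightarrow> nat) \<Rightarrow> ('i \<Rightarrow>\<^sub>0 nat) \<Rightarrow> nat" where
  "mdeg deg a = (\<Sum>i\<in>Poly_Mapping.keys a. Poly_Mapping.lookup a i * deg i)"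

definition odd_mon :: "('i \<Rightarrow> nat) \<Rightarrow> ('i \<Rightarrow>\<^sub>0 nat) \<Rightarrow> bool" where
  "odd_mon deg a \<longleftrightarrow> (\<forall>i\<in>Poly_Mapping.keys a. odd (deg i))"

definition SymO :: "('i \<Rightarrow> nat) \<Rightarrow> ('i,'k::comm_ring_1) symV set" where
  "SymO deg = {f. \<forall>a\<in>Poly_Mapping.keys f. odd_mon deg a}"

definition homogeneous :: "('i \<Rightarrow> nat) \<Rightarrow> nat \<Rightarrow> ('i,'k::comm_ring_1) symV \<Rightarrow> bool" where
  "homogeneous deg n f \<longleftrightarrow> (\<forall>a\<in>Poly_Mapping.keys f. mdeg deg a = n)"

definition graded_map :: "('i \<Rightarrow> nat) \<Rightarrow> (('i,'k::comm_ring_1) symV \<Rightarrow> ('i,'k) symV) \<Rightarrow> bool" where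
  "graded_map deg F \<longleftrightarrow> (\<forall>n f. homogeneous deg n f \<longrightarrow> homogeneous deg n (F f))"

definition tensor :: "('i,'k::comm_ring_1) symV \<Rightarrow> ('i,'k) symV \<Rightarrow> ('i,'k) symV2" where
  "tensor f g = (\<Sum>a\<in>Poly_Mapping.keys f. \<Sum>b\<in>Poly_Mapping.keys g.
       smul (Poly_Mapping.lookup f a * Poly_Mapping.lookup g b) (mon (a, b)))"

definition tensor_map :: "(('i,'k::comm_ring_1) symV \<Rightarrow> ('i,'k) symV)
     \<Rightarrow> (('i,'k) symV \<Rightarrow> ('i,'k) symV) \<Rightarrow> ('i,'k) symV2 \<Rightarrow> ('i,'k) symV2" where
  "tensor_map F G h = (\<Sum>ab\<in>Poly_Mapping.keys h.
       smul (Poly_Mapping.lookup h ab) (tensor (F (mon (fst ab))) (G (mon (snd ab)))))"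

definition coprod :: "('i,'k::comm_ring_1) symV \<Rightarrow> ('i,'k) symV2" where
  "coprod = subst (\<lambda>i. tensor (var i) 1 + tensor 1 (var i))"

definition counit :: "('i,'k::comm_ring_1) symV \<Rightarrow> 'k" where
  "counit f = Poly_Mapping.lookup f 0"

definition antipode :: "('i,'k::comm_ring_1) symV \<Rightarrow> ('i,'k) symV" where
  "antipode = subst (\<lambda>i. - var i)"

definition hopf_morphism :: "(('i,'k::comm_ring_1) symV \<Rightarrow> ('i,'k) symV) \<Rightarrow> bool" where
  "hopf_morphism F \<longleftrightarrow>
     (\<forall>f g. F (f + g) = F f + F g) \<and>
     (\<forall>c f. F (smul c f) = smul c (F f)) \<and>
     F 1 = 1 \<and>
     (\<forall>f g. F (f * g) = F f * F g) \<and>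
     (\<forall>f. coprod (F f) = tensor_map F F (coprod f)) \<and>
     (\<forall>f. counit (F f) = counit f) \<and>
     (\<forall>f. antipode (F f) = F (antipode f))"

definition PhiSymV :: "('i \<Rightarrow> nat) \<Rightarrow> ('i,'k::comm_ring_1) symV \<Rightarrow> 'k symf" where
  "PhiSymV deg = subst (\<lambda>i. psum (deg i))"

definition ThetaSym :: "'k::comm_ring_1 symf \<Rightarrow> 'k symf" where
  "ThetaSym = subst (\<lambda>m. if odd (m + 1) then smul 2 (psum (m + 1)) else 0)"

definition theta_map :: "('i \<Rightarrow> nat) \<Rightarrow> (('i,'k::comm_ring_1) symV \<Rightarrow> ('i,'k) symV) \<Rightarrow> bool" where
  "theta_map deg F \<longleftrightarrow> hopf_morphism F \<and> graded_map deg F \<and>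
      PhiSymV deg \<circ> F = ThetaSym \<circ> PhiSymV deg"

definition ThetaSymV :: "('i \<Rightarrow> nat) \<Rightarrow> ('i,'k::comm_ring_1) symV \<Rightarrow> ('i,'k) symV" where
  "ThetaSymV deg f = (\<Sum>a\<in>Poly_Mapping.keys f.
       smul (Poly_Mapping.lookup f a)
         (if odd_mon deg a then smul (2 ^ mlen a) (mon a) else 0))"

end

theory Submission
  imports Defs
begin

definition MW :: "('m \<Rightarrow> 'k::comm_ring_1) \<Rightarrow> ('m \<Rightarrow>\<^sub>0 'k) \<Rightarrow> ('m \<Rightarrow>\<^sub>0 'k)" where
  "MW w f = Abs_poly_mapping (\<lambda>x. Poly_Mapping.lookup f x * w x)"

lemma lookup_MW [simp]: "Poly_Mapping.lookup (MW w f) x = Poly_Mapping.lookup f x * w x"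
proof -
  have "finite {x. Poly_Mapping.lookup f x * w x \<noteq> 0}"
    by (rule finite_subset[of _ "Poly_Mapping.keys f"]) (auto simp: in_keys_iff)
  then show ?thesis unfolding MW_def by simp
qed

lemma keys_MW: "Poly_Mapping.keys (MW w f) \<subseteq> Poly_Mapping.keys f"
  by (auto simp: in_keys_iff)

lemma lookup_smul [simp]: "Poly_Mapping.lookup (smul c f) x = c * Poly_Mapping.lookup f x"
  unfolding smul_def by (simp add: Poly_Mapping.map.rep_eq when_def)

lemma MW_add: "MW w (f + g) = MW w f + MW w g"
  by (rule poly_mapping_eqI) (simp add: lookup_add algebra_simps)

lemma MW_uminus: "MW w (- f) = - MW w f"
  by (rule poly_mapping_eqI) simp

lemma MW_smul: "MW w (smul c f) = smul c (MW w f)"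
  by (rule poly_mapping_eqI) (simp add: algebra_simps)

lemma MW_sum: "MW w (sum h S) = (\<Sum>x\<in>S. MW w (h x))"
  by (rule poly_mapping_eqI) (simp add: lookup_sum sum_distrib_right)

lemma MW_single: "MW w (Poly_Mapping.single a c) = Poly_Mapping.single a (c * w a)"
  by (rule poly_mapping_eqI) (simp add: lookup_single when_def)

lemma expand: "f = (\<Sum>a\<in>Poly_Mapping.keys f. Poly_Mapping.single a (Poly_Mapping.lookup f a))"
proof (rule poly_mapping_eqI)
  fix x
  show "Poly_Mapping.lookup f x = Poly_Mapping.lookup (\<Sum>a\<in>Poly_Mapping.keys f. Poly_Mapping.single a (Poly_Mapping.lookup f a)) x"
    by (cases "x \<in> Poly_Mapping.keys f") (auto simp: lookup_sum lookup_single when_def in_keys_iff)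
qed

lemma MW_mult:
  fixes w :: "'m::comm_monoid_add \<Rightarrow> 'k::comm_ring_1"
  assumes wm: "\<And>x y. w (x + y) = w x * w y"
  shows "MW w (f * g) = MW w f * MW w g"
proof -
  have ef: "(\<Sum>a\<in>Poly_Mapping.keys f. Poly_Mapping.single a (Poly_Mapping.lookup f a)) = f"
    by (rule expand[symmetric])
  have eg: "(\<Sum>a\<in>Poly_Mapping.keys g. Poly_Mapping.single a (Poly_Mapping.lookup g a)) = g"
    by (rule expand[symmetric])
  have "f * g = (\<Sum>a\<in>Poly_Mapping.keys f. Poly_Mapping.single a (Poly_Mapping.lookup f a)) *
      (\<Sum>a\<in>Poly_Mapping.keys g. Poly_Mapping.single a (Poly_Mapping.lookup g a))"
    by (simp only: ef eg)
  also have "\<dots> = (\<Sum>a\<in>Poly_Mapping.keys f. \<Sum>b\<in>Poly_Mapping.keys g.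
      Poly_Mapping.single (a + b) (Poly_Mapping.lookup f a * Poly_Mapping.lookup g b))"
    by (simp add: sum_product mult_single)
  finally have 1: "MW w (f * g) = (\<Sum>a\<in>Poly_Mapping.keys f. \<Sum>b\<in>Poly_Mapping.keys g.
      Poly_Mapping.single (a + b) (Poly_Mapping.lookup f a * Poly_Mapping.lookup g b * (w a * w b)))"
    by (simp add: MW_sum MW_single wm)
  have "MW w f * MW w g = MW w (\<Sum>a\<in>Poly_Mapping.keys f. Poly_Mapping.single a (Poly_Mapping.lookup f a)) *
      MW w (\<Sum>a\<in>Poly_Mapping.keys g. Poly_Mapping.single a (Poly_Mapping.lookup g a))"
    by (simp only: ef eg)
  also have "\<dots> = (\<Sum>a\<in>Poly_Mapping.keys f. \<Sum>b\<in>Poly_Mapping.keys g.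
      Poly_Mapping.single (a + b) (Poly_Mapping.lookup f a * Poly_Mapping.lookup g b * (w a * w b)))"
    by (simp add: MW_sum MW_single sum_product mult_single algebra_simps)
  finally show ?thesis using 1 by simp
qed

lemma MW_one:
  assumes "w 0 = 1"
  shows "MW w 1 = 1"
  by (rule poly_mapping_eqI) (auto simp: lookup_one when_def assms)

lemma MW_power:
  fixes w :: "'m::comm_monoid_add \<Rightarrow> 'k::comm_ring_1"
  assumes wm: "\<And>x y. w (x + y) = w x * w y" and w0: "w 0 = 1"
  shows "MW w (f ^ n) = MW w f ^ n"
  by (induction n) (simp_all add: MW_one[of w, OF w0] MW_mult[OF wm])

lemma MW_prod:
  fixes w :: "'m::comm_monoid_add \<Rightarrow> 'k::comm_ring_1"
  assumes wm: "\<And>x y. w (x + y) = w x * w y" and w0: "w 0 = 1"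
  shows "MW w (prod h S) = (\<Prod>x\<in>S. MW w (h x))"
  by (induction S rule: infinite_finite_induct) (simp_all add: MW_one[of w, OF w0] MW_mult[OF wm])

lemma MW_subst:
  fixes w :: "'m::comm_monoid_add \<Rightarrow> 'k::comm_ring_1"
  assumes wm: "\<And>x y. w (x + y) = w x * w y" and w0: "w 0 = 1"
  shows "MW w (subst g f) = subst (\<lambda>i. MW w (g i)) f"
  unfolding subst_def by (simp add: MW_sum MW_smul MW_prod[OF wm w0] MW_power[OF wm w0])


definition wt :: "('i \<Rightarrow> 'k::comm_ring_1) \<Rightarrow> ('i \<Rightarrow>\<^sub>0 nat) \<Rightarrow> 'k" where
  "wt c a = (\<Prod>i\<in>Poly_Mapping.keys a. c i ^ Poly_Mapping.lookup a i)"

lemma wt_superset: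
  assumes "finite S" "Poly_Mapping.keys a \<subseteq> S"
  shows "wt c a = (\<Prod>i\<in>S. c i ^ Poly_Mapping.lookup a i)"
  unfolding wt_def
  by (rule prod.mono_neutral_left[OF assms]) (auto simp: in_keys_iff)

lemma wt_add: "wt c (a + b) = wt c a * wt c b"
proof -
  let ?S = "Poly_Mapping.keys a \<union> Poly_Mapping.keys b"
  have "wt c (a + b) = (\<Prod>i\<in>?S. c i ^ Poly_Mapping.lookup (a + b) i)"
    by (rule wt_superset) (auto simp: in_keys_iff lookup_add)
  also have "\<dots> = (\<Prod>i\<in>?S. c i ^ Poly_Mapping.lookup a i) * (\<Prod>i\<in>?S. c i ^ Poly_Mapping.lookup b i)"
    by (simp add: lookup_add power_add prod.distrib)
  also have "\<dots> = wt c a * wt c b"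
    by (simp add: wt_superset[symmetric])
  finally show ?thesis .
qed

lemma wt_zero [simp]: "wt c 0 = 1"
  by (simp add: wt_def)

lemma wt_single [simp]: "wt c (Poly_Mapping.single i 1) = c i"
  by (simp add: wt_def)

lemma wt_single_Suc [simp]: "wt c (Poly_Mapping.single i (Suc 0)) = c i"
  by (simp add: wt_def)

lemma wt2_add:
  fixes c :: "'i \<Rightarrow> 'k::comm_ring_1"
  shows "(\<lambda>ab. wt c (fst ab) * wt c (snd ab)) (x + y) =
   (\<lambda>ab. wt c (fst ab) * wt c (snd ab)) x * (\<lambda>ab. wt c (fst ab) * wt c (snd ab)) y"
  by (simp add: wt_add algebra_simps)

lemma smul_single0: "smul c f = Poly_Mapping.single 0 c * f"
  unfolding smul_def by (rule mult_map_scale_conv_mult)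

lemma single0_power: "Poly_Mapping.single (0::'m::monoid_add) (c::'k::comm_ring_1) ^ n = Poly_Mapping.single 0 (c ^ n)"
  by (induction n) (simp_all add: mult_single)

lemma single0_prod: "(\<Prod>i\<in>S. Poly_Mapping.single (0::'m::comm_monoid_add) (h i::'k::comm_ring_1)) = Poly_Mapping.single 0 (prod h S)"
  by (induction S rule: infinite_finite_induct) (simp_all add: mult_single)

lemma single0_mult: "Poly_Mapping.single (0::'m::comm_monoid_add) ((x::'k::comm_ring_1) * y) =
   Poly_Mapping.single 0 x * Poly_Mapping.single 0 y"
  by (simp add: mult_single)

lemma subst_superset:
  assumes "finite S" "Poly_Mapping.keys f \<subseteq> S"
  shows "subst g f = (\<Sum>a\<in>S. smul (Poly_Mapping.lookup f a)
     (\<Prod>i\<in>Poly_Mapping.keys a. g i ^ Poly_Mapping.lookup a i))"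
  unfolding subst_def
  by (rule sum.mono_neutral_left[OF assms]) (auto simp: in_keys_iff smul_single0)

lemma subst_MW:
  "subst g (MW (wt c) f) = subst (\<lambda>i. smul (c i) (g i)) f"
proof -
  have "subst g (MW (wt c) f) = (\<Sum>a\<in>Poly_Mapping.keys f. smul (Poly_Mapping.lookup f a * wt c a)
     (\<Prod>i\<in>Poly_Mapping.keys a. g i ^ Poly_Mapping.lookup a i))"
    using subst_superset[of "Poly_Mapping.keys f" "MW (wt c) f" g] keys_MW[of "wt c" f] by simp
  also have "\<dots> = subst (\<lambda>i. smul (c i) (g i)) f"
    unfolding subst_def wt_def
    by (simp add: smul_single0 power_mult_distrib prod.distrib single0_power single0_prod single0_mult
       mult_ac)
  finally show ?thesis .
qed

lemma var_power: "(var i :: ('i,'k::comm_ring_1) symV) ^ n = Poly_Mapping.single (Poly_Mapping.single i n) 1"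
proof (induction n)
  case 0 then show ?case by simp
next
  case (Suc n) then show ?case
    by (simp add: var_def mon_def mult_single single_add[symmetric] add.commute)
qed

lemma single_prod1: "(\<Prod>i\<in>S. Poly_Mapping.single (h i :: 'm::comm_monoid_add) (1::'k::comm_ring_1)) = Poly_Mapping.single (sum h S) 1"
  by (induction S rule: infinite_finite_induct) (simp_all add: mult_single)

lemma subst_var: "subst var f = (f :: ('i,'k::comm_ring_1) symV)"
proof -
  have "\<And>a. (\<Prod>i\<in>Poly_Mapping.keys a. (var i :: ('i,'k) symV) ^ Poly_Mapping.lookup a i) = Poly_Mapping.single a 1"
    by (simp add: var_power single_prod1 expand[symmetric])
  then have "subst var f = (\<Sum>a\<in>Poly_Mapping.keys f. smul (Poly_Mapping.lookup f a) (Poly_Mapping.single a 1))"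
    unfolding subst_def by simp
  also have "\<dots> = f"
    by (subst (2) expand) (simp add: smul_def)
  finally show ?thesis .
qed

lemma subst_cong: assumes "\<And>i. g i = h i" shows "subst g f = subst h f"
proof -
  have "g = h" using assms by auto
  then show ?thesis by simp
qed


definition cV :: "('i \<Rightarrow> nat) \<Rightarrow> 'i \<Rightarrow> 'k::comm_ring_1" where
  "cV deg i = (if odd (deg i) then 2 else 0)"

definition cT :: "nat \<Rightarrow> 'k::comm_ring_1" where
  "cT m = (if odd (m + 1) then 2 else 0)"

lemma smul_single: "smul c (Poly_Mapping.single k (1::'k::comm_ring_1)) = Poly_Mapping.single k c"
  by (rule poly_mapping_eqI) (simp add: lookup_single when_def)

lemma smul_add: "smul c (f + g) = smul c f + smul c g"
  by (rule poly_mapping_eqI) (simp add: lookup_add algebra_simps)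

lemma smul_uminus: "smul c (- f) = - smul c f"
  by (rule poly_mapping_eqI) simp

lemma smul_zero_left: "smul 0 f = 0"
  by (rule poly_mapping_eqI) simp

lemma wt_eq: "wt (cV deg :: 'i \<Rightarrow> 'k::comm_ring_1) a = (if odd_mon deg a then 2 ^ mlen a else 0)"
proof (cases "odd_mon deg a")
  case True
  then have "wt (cV deg :: 'i \<Rightarrow> 'k) a = (\<Prod>i\<in>Poly_Mapping.keys a. 2 ^ Poly_Mapping.lookup a i)"
    unfolding wt_def odd_mon_def cV_def by (intro prod.cong) auto
  also have "\<dots> = 2 ^ mlen a" by (simp add: mlen_def power_sum)
  finally show ?thesis using True by simp
next
  case False
  then obtain i where i: "i \<in> Poly_Mapping.keys a" "even (deg i)" unfolding odd_mon_def by auto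
  then have "(cV deg i :: 'k) ^ Poly_Mapping.lookup a i = 0"
    by (simp add: cV_def in_keys_iff zero_power)
  then have "wt (cV deg :: 'i \<Rightarrow> 'k) a = 0"
    unfolding wt_def using i(1) by (intro prod_zero) auto
  then show ?thesis using False by simp
qed

lemma ThetaSymV_eq: "ThetaSymV deg (f :: ('i,'k::comm_ring_1) symV) = MW (wt (cV deg)) f"
proof -
  have 1: "\<And>a. (if odd_mon deg a then smul (2 ^ mlen a) (mon a) else 0) =
       (Poly_Mapping.single a (wt (cV deg) a) :: ('i,'k) symV)"
    by (simp add: wt_eq mon_def smul_single)
  have "ThetaSymV deg f = (\<Sum>a\<in>Poly_Mapping.keys f. MW (wt (cV deg)) (Poly_Mapping.single a (Poly_Mapping.lookup f a)))"
    unfolding ThetaSymV_def 1 by (simp add: MW_single smul_def)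
  also have "\<dots> = MW (wt (cV deg)) f"
    by (subst (2) expand) (simp add: MW_sum)
  finally show ?thesis .
qed

lemma ThetaSym_eq: "ThetaSym (h :: 'k::comm_ring_1 symf) = MW (wt cT) h"
proof -
  have "ThetaSym h = subst (\<lambda>m. smul (cT m) (var m)) h"
    unfolding ThetaSym_def by (rule subst_cong) (simp add: cT_def psum_def smul_zero_left)
  also have "\<dots> = subst var (MW (wt cT) h)" by (simp add: subst_MW)
  also have "\<dots> = MW (wt cT) h" by (simp add: subst_var)
  finally show ?thesis .
qed

lemma tensor_single: "tensor (Poly_Mapping.single a (c::'k::comm_ring_1)) (Poly_Mapping.single b d) =
   Poly_Mapping.single (a, b) (c * d)"
  by (cases "c = 0"; cases "d = 0") (simp_all add: tensor_def mon_def smul_single)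

lemma tensor_map_eq:
  "tensor_map (MW (wt c)) (MW (wt c)) (h :: ('i,'k::comm_ring_1) symV2) =
   MW (\<lambda>ab. wt c (fst ab) * wt c (snd ab)) h"
proof -
  have "tensor_map (MW (wt c)) (MW (wt c)) h = (\<Sum>ab\<in>Poly_Mapping.keys h.
      MW (\<lambda>ab. wt c (fst ab) * wt c (snd ab)) (Poly_Mapping.single ab (Poly_Mapping.lookup h ab)))"
    unfolding tensor_map_def
    by (intro sum.cong) (simp_all add: mon_def MW_single tensor_single smul_def)
  also have "\<dots> = MW (\<lambda>ab. wt c (fst ab) * wt c (snd ab)) h"
    by (subst (2) expand) (simp add: MW_sum)
  finally show ?thesis .
qed


theorem mainTheorem13:
  fixes deg :: "'i \<Rightarrow> nat"
  assumes deg_pos: "\<And>i. deg i > 0"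
    and deg_fin: "\<And>n. finite {i. deg i = n}"
  shows "hopf_morphism (ThetaSymV deg :: ('i,'k::field_char_0) symV \<Rightarrow> ('i,'k) symV)
    \<and> graded_map deg (ThetaSymV deg :: ('i,'k) symV \<Rightarrow> ('i,'k) symV)
    \<and> (\<forall>f :: ('i,'k) symV. ThetaSymV deg f \<in> SymO deg)
    \<and> PhiSymV deg \<circ> (ThetaSymV deg :: ('i,'k) symV \<Rightarrow> ('i,'k) symV) = ThetaSym \<circ> PhiSymV deg
    \<and> theta_map deg (ThetaSymV deg :: ('i,'k) symV \<Rightarrow> ('i,'k) symV)"
proof -
  define w :: "('i \<Rightarrow>\<^sub>0 nat) \<Rightarrow> 'k" where "w = wt (cV deg)"
  define w2 :: "('i \<Rightarrow>\<^sub>0 nat) \<times> ('i \<Rightarrow>\<^sub>0 nat) \<Rightarrow> 'k" where "w2 = (\<lambda>ab. w (fst ab) * w (snd ab))"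
  have F: "(ThetaSymV deg :: ('i,'k) symV \<Rightarrow> ('i,'k) symV) = MW w"
    by (rule ext) (simp add: ThetaSymV_eq w_def)
  have wm: "\<And>x y. w (x + y) = w x * w y" by (simp add: w_def wt_add)
  have w0: "w 0 = 1" by (simp add: w_def)
  have w2m: "\<And>x y. w2 (x + y) = w2 x * w2 y" by (simp add: w2_def wm algebra_simps)
  have w20: "w2 0 = 1" by (simp add: w2_def w0)
  have we: "\<And>i. w (Poly_Mapping.single i 1) = cV deg i" unfolding w_def by (rule wt_single)
  have we': "\<And>i. w (Poly_Mapping.single i (Suc 0)) = cV deg i" using we by simp
  have coprod: "coprod (MW w f) = tensor_map (MW w) (MW w) (coprod f)" for f :: "('i,'k) symV"
  proof -
    have tm: "tensor_map (MW w) (MW w) h = MW w2 h" for h :: "('i,'k) symV2"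
      unfolding w_def w2_def by (rule tensor_map_eq)
    have t1: "tensor (var i) (1::('i,'k) symV) = Poly_Mapping.single (Poly_Mapping.single i 1, 0) 1" for i
      using tensor_single[where b=0 and d=1 and a="Poly_Mapping.single i 1" and c="1::'k"]
      by (simp add: var_def mon_def)
    have t2: "tensor (1::('i,'k) symV) (var i) = Poly_Mapping.single (0, Poly_Mapping.single i 1) 1" for i
      using tensor_single[where a=0 and c=1 and b="Poly_Mapping.single i 1" and d="1::'k"]
      by (simp add: var_def mon_def)
    have "coprod (MW w f) = subst (\<lambda>i. smul (cV deg i) (tensor (var i) 1 + tensor 1 (var i))) f"
      unfolding coprod_def w_def by (rule subst_MW)
    also have "\<dots> = subst (\<lambda>i. MW w2 (tensor (var i) 1 + tensor 1 (var i))) f"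
    proof (rule subst_cong)
      fix i
      have a: "w2 (Poly_Mapping.single i 1, 0) = cV deg i" "w2 (0, Poly_Mapping.single i 1) = cV deg i"
        unfolding w2_def by (simp_all only: fst_conv snd_conv we w0 mult_1 mult_1_right)
      show "smul (cV deg i) (tensor (var i) 1 + tensor 1 (var i)) = MW w2 (tensor (var i) 1 + tensor 1 (var i))"
        by (simp only: t1 t2 MW_add MW_single a smul_add smul_single mult_1)
    qed
    also have "\<dots> = MW w2 (coprod f)"
      unfolding coprod_def by (rule MW_subst[OF w2m w20, symmetric])
    finally show ?thesis by (simp add: tm)
  qed
  have antip: "antipode (MW w f) = MW w (antipode f)" for f :: "('i,'k) symV"
  proof -
    have "antipode (MW w f) = subst (\<lambda>i. smul (cV deg i) (- var i)) f"
      unfolding antipode_def w_def by (rule subst_MW)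
    also have "\<dots> = subst (\<lambda>i. MW w (- var i)) f"
      by (rule subst_cong) (simp only: var_def mon_def MW_uminus MW_single smul_uminus smul_single mult_1 we)
    also have "\<dots> = MW w (antipode f)"
      unfolding antipode_def by (rule MW_subst[OF wm w0, symmetric])
    finally show ?thesis .
  qed
  have hopf: "hopf_morphism (MW w :: ('i,'k) symV \<Rightarrow> ('i,'k) symV)"
    unfolding hopf_morphism_def
  proof (intro conjI)
    show "MW w 1 = (1::('i,'k) symV)" by (rule MW_one[of w, OF w0])
    show "\<forall>f g. MW w (f + g) = MW w f + MW w (g::('i,'k) symV)" by (simp add: MW_add)
    show "\<forall>c f. MW w (smul c f) = smul c (MW w (f::('i,'k) symV))" by (simp add: MW_smul)
    show "\<forall>f g. MW w (f * g) = MW w f * MW w (g::('i,'k) symV)" by (simp add: MW_mult[OF wm])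
    show "\<forall>f. coprod (MW w f) = tensor_map (MW w) (MW w) (coprod (f::('i,'k) symV))" using coprod by blast
    show "\<forall>f. counit (MW w f) = counit (f::('i,'k) symV)" by (simp add: counit_def w0)
    show "\<forall>f. antipode (MW w f) = MW w (antipode (f::('i,'k) symV))" using antip by blast
  qed
  have graded: "graded_map deg (MW w :: ('i,'k) symV \<Rightarrow> ('i,'k) symV)"
    unfolding graded_map_def homogeneous_def
  proof (intro allI impI ballI)
    fix n and f :: "('i,'k) symV" and a
    assume h: "\<forall>a\<in>Poly_Mapping.keys f. mdeg deg a = n" and a: "a \<in> Poly_Mapping.keys (MW w f)"
    from a have "a \<in> Poly_Mapping.keys f" by (rule subsetD[OF keys_MW])
    with h show "mdeg deg a = n" by (rule bspec)
  qed
  have symo: "MW w f \<in> SymO deg" for f :: "('i,'k) symV"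
    unfolding SymO_def
  proof (intro CollectI ballI)
    fix a assume "a \<in> Poly_Mapping.keys (MW w f)"
    then have "w a \<noteq> 0" by (simp add: in_keys_iff)
    show "odd_mon deg a"
    proof (rule ccontr)
      assume "\<not> odd_mon deg a"
      then have "w a = 0" unfolding w_def wt_eq by simp
      with \<open>w a \<noteq> 0\<close> show False by simp
    qed
  qed
  have phi: "PhiSymV deg \<circ> (MW w :: ('i,'k) symV \<Rightarrow> ('i,'k) symV) = ThetaSym \<circ> PhiSymV deg"
  proof (rule ext)
    fix f :: "('i,'k) symV"
    have "PhiSymV deg (MW w f) = subst (\<lambda>i. smul (cV deg i) (psum (deg i))) f"
      unfolding PhiSymV_def w_def by (rule subst_MW)
    also have "\<dots> = subst (\<lambda>i. MW (wt cT) (psum (deg i))) f"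
    proof (rule subst_cong)
      fix i
      have "cT (deg i - 1) = (cV deg i :: 'k)"
        using deg_pos[of i] by (simp add: cT_def cV_def)
      then show "smul (cV deg i) (psum (deg i)) = (MW (wt cT) (psum (deg i)) :: 'k symf)"
        by (simp add: psum_def var_def mon_def smul_single MW_single)
    qed
    also have "\<dots> = MW (wt cT) (PhiSymV deg f)"
      unfolding PhiSymV_def
      by (rule MW_subst[of "wt cT" "\<lambda>i. psum (deg i)" f, symmetric]) (simp_all only: wt_add wt_zero)
    finally show "(PhiSymV deg \<circ> MW w) f = (ThetaSym \<circ> PhiSymV deg) f"
      by (simp add: ThetaSym_eq)
  qed
  show ?thesis
    unfolding F theta_map_def using hopf graded phi by (intro conjI allI) (assumption | rule symo)+
qed

end
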